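(* Let $\Lambda,\mathcal R,V$ satisfy the assumptions in the context and let $W(F)=\frac{1}{\det A_\Lambda}V((F\cdot\rho)_{\rho\in\mathcal R})$ for $F\in\mathbb{R}^2$. Then $\nabla^2W(0)=c_{\rm lin}\mathrm{Id}$ for some $c_{\rm lin}>0$, and therefore $-\mathrm{div}(\nabla^2W(0)[\nabla u])=-c_{\rm lin}\Delta u$ for every twice differentiable $u$.
   Context: $\Lambda=A_\Lambda\mathbb{Z}^2$ is the square lattice ($A_\Lambda=\mathrm{Id}$) or the triangular lattice ($A_\Lambda=\begin{pmatrix}1&\frac12\\0&\frac{\sqrt3}{2}\end{pmatrix}$); $Q_\Lambda$ is the rotation through $\pi/2$ (square) or $2\pi/3$ (triangular). $\mathcal R\subset\Lambda\setminus\{0\}$ is finite with $\mathrm{span}_\mathbb{Z}\mathcal R=\Lambda$ and $Q_\Lambda\mathcal R=\mathcal R$. $V\in C^6(\mathbb{R}^{\mathcal R},\mathbb{R})$ satisfies $V(A)=V((A_{Q_\Lambda\rho})_{\rho\in\mathcal R})$, is periodic with some minimal period $p>0$ in each component, and is lattice stable: there is $c_0>0$ with $\sum_{x\in\Lambda}\sum_{\rho,\sigma\in\mathcal R}\nabla^2V(0)_{\rho\sigma}D_\rho u(x)D_\sigma u(x)\ge c_0\sum_x|(D_\rho u(x))_{\rho\in\mathcal R}|^2$ for all $u:\Lambda\to\mathbb{R}$ with $(D_\rho u)_\rho\in\ell^2$, where $D_\rho u(x)=u(x+\rho)-u(x)$. *)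

theory Defs
  imports "HOL-Analysis.Analysis"
begin

definition pderiv_at :: "(real^'n \<Rightarrow> real) \<Rightarrow> 'n \<Rightarrow> real^'n \<Rightarrow> real" where
  "pderiv_at f i x = frechet_derivative f (at x) (axis i 1)"

definition hess_at :: "(real^'n \<Rightarrow> real) \<Rightarrow> real^'n \<Rightarrow> 'n \<Rightarrow> 'n \<Rightarrow> real" where
  "hess_at f x i j = pderiv_at (pderiv_at f i) j x"

fun Ck :: "nat \<Rightarrow> (real^'n \<Rightarrow> real) \<Rightarrow> bool" where
  "Ck 0 f = continuous_on UNIV f"
| "Ck (Suc k) f = (continuous_on UNIV f \<and> (\<forall>x. f differentiable (at x)) \<and> (\<forall>i. Ck k (pderiv_at f i)))"

definition twice_differentiable :: "(real^'n \<Rightarrow> real) \<Rightarrow> bool" where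
  "twice_differentiable u = ((\<forall>x. u differentiable (at x)) \<and>
     (\<forall>i x. pderiv_at u i differentiable (at x)))"

text \<open>Matrices are given by their rows.\<close>
definition rot2 :: "real \<Rightarrow> real^2^2" where
  "rot2 \<theta> = vector [vector [cos \<theta>, - sin \<theta>], vector [sin \<theta>, cos \<theta>]]"

definition A_square :: "real^2^2" where
  "A_square = mat 1"

definition A_tri :: "real^2^2" where
  "A_tri = vector [vector [1, 1/2], vector [0, sqrt 3 / 2]]"

definition lattice :: "real^2^2 \<Rightarrow> (real^2) set" where
  "lattice A = range (\<lambda>z::int^2. A *v (\<chi> i. real_of_int (z $ i)))"

definition int_span :: "(real^2) set \<Rightarrow> (real^2) set" where
  "int_span R = {y. \<exists>c::real^2 \<Rightarrow> int. y = (\<Sum>r\<in>R. of_int (c r) *\<^sub>R r)}"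

definition fdiff :: "real^2 \<Rightarrow> (real^2 \<Rightarrow> real) \<Rightarrow> real^2 \<Rightarrow> real" where
  "fdiff \<rho> u x = u (x + \<rho>) - u x"

end

theory Submission
  imports Defs "HOL-Real_Asymp.Real_Asymp"
begin


lemma fd_expand:
  fixes f :: "real^'n \<Rightarrow> real"
  assumes "f differentiable (at y)"
  shows "frechet_derivative f (at y) h = (\<Sum>p\<in>UNIV. h$p * pderiv_at f p y)"
proof -
  have lin: "linear (frechet_derivative f (at y))"
    using assms frechet_derivative_works has_derivative_linear by blast
  have "frechet_derivative f (at y) h = frechet_derivative f (at y) (\<Sum>p\<in>UNIV. h$p *\<^sub>R axis p 1)"
    using basis_expansion[of h] by (simp add: scalar_mult_eq_scaleR)
  also have "\<dots> = (\<Sum>p\<in>UNIV. h$p * frechet_derivative f (at y) (axis p 1))"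
    using lin by (simp add: linear_sum linear_scale)
  finally show ?thesis by (simp add: pderiv_at_def)
qed

lemma pderiv_comp_mat:
  fixes f :: "real^'n \<Rightarrow> real" and M :: "real^'m^'n"
  assumes "f differentiable (at (M *v x))"
  shows "pderiv_at (\<lambda>y. f (M *v y)) k x = (\<Sum>p\<in>UNIV. (M *v axis k 1)$p * pderiv_at f p (M *v x))"
proof -
  have d1: "((*v) M has_derivative (*v) M) (at x)"
    by (intro bounded_linear_imp_has_derivative) simp
  have d2: "(f has_derivative frechet_derivative f (at (M *v x))) (at (M *v x))"
    using assms frechet_derivative_works by blast
  have "((f \<circ> (*v) M) has_derivative (frechet_derivative f (at (M *v x)) \<circ> (*v) M)) (at x)"
    using diff_chain_at[OF d1 d2] .
  from frechet_derivative_at[OF this]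
  have "frechet_derivative (\<lambda>y. f (M *v y)) (at x) = frechet_derivative f (at (M *v x)) \<circ> (*v) M"
    by (simp add: comp_def)
  hence "pderiv_at (\<lambda>y. f (M *v y)) k x = frechet_derivative f (at (M *v x)) (M *v axis k 1)"
    unfolding pderiv_at_def by simp
  thus ?thesis using fd_expand[OF assms, of "M *v axis k 1"] by simp
qed

lemma pderiv_lin_comb:
  fixes g :: "'a \<Rightarrow> real^'n \<Rightarrow> real"
  assumes "finite S" "\<And>p. p \<in> S \<Longrightarrow> g p differentiable (at x)"
  shows "pderiv_at (\<lambda>y. \<Sum>p\<in>S. c p * g p y) l x = (\<Sum>p\<in>S. c p * pderiv_at (g p) l x)"
proof -
  have "((\<lambda>y. \<Sum>p\<in>S. c p * g p y) has_derivative (\<lambda>h. \<Sum>p\<in>S. c p * frechet_derivative (g p) (at x) h)) (at x)"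
    using assms by (intro has_derivative_sum has_derivative_mult_right) (auto simp: frechet_derivative_works)
  from frechet_derivative_at[OF this]
  have "frechet_derivative (\<lambda>y. \<Sum>p\<in>S. c p * g p y) (at x) = (\<lambda>h. \<Sum>p\<in>S. c p * frechet_derivative (g p) (at x) h)"
    by simp
  thus ?thesis unfolding pderiv_at_def by simp
qed

lemma differentiable_lin_comb:
  fixes g :: "'a \<Rightarrow> real^'n \<Rightarrow> real"
  assumes "finite S" "\<And>p. p \<in> S \<Longrightarrow> g p differentiable (at x)"
  shows "(\<lambda>y. \<Sum>p\<in>S. c p * g p y) differentiable (at x)"
  using assms by (intro differentiable_sum differentiable_mult) auto

lemma differentiable_comp_mat:
  fixes f :: "real^'n \<Rightarrow> real" and M :: "real^'m^'n"
  assumes "f differentiable (at (M *v x))"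
  shows "(\<lambda>y. f (M *v y)) differentiable (at x)"
proof -
  have "((*v) M) differentiable (at x)"
    by (intro bounded_linear_imp_differentiable) simp
  from differentiable_chain_at[OF this assms] show ?thesis by (simp add: comp_def)
qed

lemma pderiv_comp_mat_fun:
  fixes f :: "real^'n \<Rightarrow> real" and M :: "real^'m^'n"
  assumes "\<And>y. f differentiable (at y)"
  shows "pderiv_at (\<lambda>y. f (M *v y)) k = (\<lambda>y. \<Sum>p\<in>UNIV. (M *v axis k 1)$p * pderiv_at f p (M *v y))"
  by (rule ext, rule pderiv_comp_mat[OF assms])

lemma hess_comp_mat:
  fixes f :: "real^'n \<Rightarrow> real" and M :: "real^'m^'n"
  assumes "\<And>y. f differentiable (at y)" "\<And>p y. pderiv_at f p differentiable (at y)"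
  shows "hess_at (\<lambda>y. f (M *v y)) x k l =
     (\<Sum>p\<in>UNIV. \<Sum>q\<in>UNIV. (M *v axis k 1)$p * (M *v axis l 1)$q * hess_at f (M *v x) p q)"
proof -
  have "hess_at (\<lambda>y. f (M *v y)) x k l =
     pderiv_at (\<lambda>y. \<Sum>p\<in>UNIV. (M *v axis k 1)$p * pderiv_at f p (M *v y)) l x"
    unfolding hess_at_def pderiv_comp_mat_fun[OF assms(1)] ..
  also have "\<dots> = (\<Sum>p\<in>UNIV. (M *v axis k 1)$p * pderiv_at (\<lambda>y. pderiv_at f p (M *v y)) l x)"
    using assms by (intro pderiv_lin_comb differentiable_comp_mat) auto
  also have "\<dots> = (\<Sum>p\<in>UNIV. (M *v axis k 1)$p *
       (\<Sum>q\<in>UNIV. (M *v axis l 1)$q * hess_at f (M *v x) p q))"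
  proof (rule sum.cong[OF refl])
    fix p
    show "(M *v axis k 1)$p * pderiv_at (\<lambda>y. pderiv_at f p (M *v y)) l x =
       (M *v axis k 1)$p * (\<Sum>q\<in>UNIV. (M *v axis l 1)$q * hess_at f (M *v x) p q)"
      unfolding hess_at_def pderiv_comp_mat[OF assms(2)[of p "M *v x"]] ..
  qed
  also have "\<dots> = (\<Sum>p\<in>UNIV. \<Sum>q\<in>UNIV. (M *v axis k 1)$p * (M *v axis l 1)$q * hess_at f (M *v x) p q)"
    by (simp add: sum_distrib_left mult.assoc)
  finally show ?thesis .
qed

lemma pderiv_div:
  fixes g :: "real^'n \<Rightarrow> real"
  assumes "g differentiable (at x)"
  shows "pderiv_at (\<lambda>y. g y / c) l x = pderiv_at g l x / c"
proof -
  have "pderiv_at (\<lambda>y. \<Sum>p\<in>{()}. (1/c) * g y) l x = (\<Sum>p\<in>{()}. (1/c) * pderiv_at g l x)"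
    using assms by (intro pderiv_lin_comb) auto
  thus ?thesis by simp
qed

lemma Ck_cont: "Ck n f \<Longrightarrow> continuous_on UNIV f"
  by (cases n) auto



lemma line_deriv:
  fixes f :: "real^'n \<Rightarrow> real"
  assumes "f differentiable (at (y + t *\<^sub>R v))"
  shows "((\<lambda>s. f (y + s *\<^sub>R v)) has_real_derivative frechet_derivative f (at (y + t *\<^sub>R v)) v) (at t)"
proof -
  have g: "((\<lambda>s. y + s *\<^sub>R v) has_derivative (\<lambda>s. s *\<^sub>R v)) (at t)"
    by (auto intro!: derivative_eq_intros)
  have d2: "(f has_derivative frechet_derivative f (at (y + t *\<^sub>R v))) (at (y + t *\<^sub>R v))"
    using assms frechet_derivative_works by blast
  have lin: "linear (frechet_derivative f (at (y + t *\<^sub>R v)))"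
    using assms frechet_derivative_works has_derivative_linear by blast
  from diff_chain_at[OF g d2]
  have "((\<lambda>s. f (y + s *\<^sub>R v)) has_derivative (\<lambda>s. frechet_derivative f (at (y + t *\<^sub>R v)) (s *\<^sub>R v))) (at t)"
    by (simp add: comp_def)
  moreover have "(\<lambda>s. frechet_derivative f (at (y + t *\<^sub>R v)) (s *\<^sub>R v)) = (*) (frechet_derivative f (at (y + t *\<^sub>R v)) v)"
    using lin by (auto simp: linear_scale)
  ultimately show ?thesis unfolding has_field_derivative_def by simp
qed

lemma mixed_mvt:
  fixes f :: "real^'n \<Rightarrow> real"
  assumes d0: "\<And>y. f differentiable (at y)"
   and di: "\<And>y. pderiv_at f i differentiable (at y)"
   and h: "0 < h"
  shows "\<exists>\<xi> \<eta>. 0 < \<xi> \<and> \<xi> < h \<and> 0 < \<eta> \<and> \<eta> < h \<and>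
    f (x + h *\<^sub>R axis i 1 + h *\<^sub>R axis j 1) - f (x + h *\<^sub>R axis i 1) - f (x + h *\<^sub>R axis j 1) + f x
     = h * (h * hess_at f (x + \<xi> *\<^sub>R axis i 1 + \<eta> *\<^sub>R axis j 1) i j)"
proof -
  define e where "e = (axis i 1 :: real^'n)"
  define e' where "e' = (axis j 1 :: real^'n)"
  define g where "g = (\<lambda>t. f ((x + h *\<^sub>R e') + t *\<^sub>R e) - f (x + t *\<^sub>R e))"
  have "\<And>t. (g has_real_derivative (pderiv_at f i ((x + h *\<^sub>R e') + t *\<^sub>R e) - pderiv_at f i (x + t *\<^sub>R e))) (at t)"
    unfolding g_def pderiv_at_def e_def
    by (intro DERIV_diff line_deriv d0)
  from MVT2[OF h this] obtain \<xi> where xi: "0 < \<xi>" "\<xi> < h"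
    and eq1: "g h - g 0 = (h - 0) * (pderiv_at f i ((x + h *\<^sub>R e') + \<xi> *\<^sub>R e) - pderiv_at f i (x + \<xi> *\<^sub>R e))"
    by blast
  define \<psi> where "\<psi> = (\<lambda>s. pderiv_at f i ((x + \<xi> *\<^sub>R e) + s *\<^sub>R e'))"
  have "\<And>s. (\<psi> has_real_derivative hess_at f ((x + \<xi> *\<^sub>R e) + s *\<^sub>R e') i j) (at s)"
    unfolding \<psi>_def hess_at_def pderiv_at_def[of "pderiv_at f i"] e'_def
    by (intro line_deriv di)
  from MVT2[OF h this] obtain \<eta> where eta: "0 < \<eta>" "\<eta> < h"
    and eq2: "\<psi> h - \<psi> 0 = (h - 0) * hess_at f ((x + \<xi> *\<^sub>R e) + \<eta> *\<^sub>R e') i j"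
    by blast
  have "\<psi> h = pderiv_at f i ((x + h *\<^sub>R e') + \<xi> *\<^sub>R e)" unfolding \<psi>_def by (simp add: add_ac)
  moreover have "\<psi> 0 = pderiv_at f i (x + \<xi> *\<^sub>R e)" unfolding \<psi>_def by simp
  ultimately have eq3: "g h - g 0 = h * (h * hess_at f (x + \<xi> *\<^sub>R e + \<eta> *\<^sub>R e') i j)"
    using eq1 eq2 by simp
  have "g h - g 0 = f (x + h *\<^sub>R e + h *\<^sub>R e') - f (x + h *\<^sub>R e) - f (x + h *\<^sub>R e') + f x"
    unfolding g_def by (simp add: add_ac)
  with eq3 xi eta show ?thesis unfolding e_def e'_def by metis
qed

lemma schwarz:
  fixes f :: "real^'n \<Rightarrow> real"
  assumes d0: "\<And>y. f differentiable (at y)"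
   and di: "\<And>y. pderiv_at f i differentiable (at y)"
   and dj: "\<And>y. pderiv_at f j differentiable (at y)"
   and ci: "continuous (at x) (\<lambda>y. hess_at f y i j)"
   and cj: "continuous (at x) (\<lambda>y. hess_at f y j i)"
  shows "hess_at f x i j = hess_at f x j i"
proof (rule ccontr)
  assume ne: "hess_at f x i j \<noteq> hess_at f x j i"
  define D where "D = \<bar>hess_at f x i j - hess_at f x j i\<bar>"
  have D: "D > 0" using ne unfolding D_def by simp
  obtain d1 where d1: "d1 > 0" "\<And>y. dist y x < d1 \<Longrightarrow> dist (hess_at f y i j) (hess_at f x i j) < D/2"
    using ci D unfolding continuous_at_eps_delta by (meson half_gt_zero)
  obtain d2 where d2: "d2 > 0" "\<And>y. dist y x < d2 \<Longrightarrow> dist (hess_at f y j i) (hess_at f x j i) < D/2"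
    using cj D unfolding continuous_at_eps_delta by (meson half_gt_zero)
  define h where "h = min d1 d2 / 3"
  have h: "h > 0" using d1 d2 unfolding h_def by simp
  obtain \<xi> \<eta> where A: "0 < \<xi>" "\<xi> < h" "0 < \<eta>" "\<eta> < h"
    "f (x + h *\<^sub>R axis i 1 + h *\<^sub>R axis j 1) - f (x + h *\<^sub>R axis i 1) - f (x + h *\<^sub>R axis j 1) + f x
     = h * (h * hess_at f (x + \<xi> *\<^sub>R axis i 1 + \<eta> *\<^sub>R axis j 1) i j)"
    using mixed_mvt[OF d0 di h] by blast
  obtain \<xi>' \<eta>' where B: "0 < \<xi>'" "\<xi>' < h" "0 < \<eta>'" "\<eta>' < h"
    "f (x + h *\<^sub>R axis j 1 + h *\<^sub>R axis i 1) - f (x + h *\<^sub>R axis j 1) - f (x + h *\<^sub>R axis i 1) + f x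
     = h * (h * hess_at f (x + \<xi>' *\<^sub>R axis j 1 + \<eta>' *\<^sub>R axis i 1) j i)"
    using mixed_mvt[OF d0 dj h] by blast
  define p where "p = x + \<xi> *\<^sub>R axis i 1 + \<eta> *\<^sub>R axis j 1"
  define q where "q = x + \<xi>' *\<^sub>R axis j 1 + \<eta>' *\<^sub>R axis i 1"
  have "h * (h * hess_at f p i j) = h * (h * hess_at f q j i)"
    using A(5) B(5) unfolding p_def q_def by (simp add: add_ac algebra_simps)
  hence eq: "hess_at f p i j = hess_at f q j i" using h by simp
  have np: "dist p x < min d1 d2"
  proof -
    have "dist p x = norm (\<xi> *\<^sub>R axis i 1 + \<eta> *\<^sub>R (axis j 1 :: real^'n))"
      unfolding p_def dist_norm by (simp add: algebra_simps)
    also have "\<dots> \<le> norm (\<xi> *\<^sub>R (axis i 1 :: real^'n)) + norm (\<eta> *\<^sub>R (axis j 1 :: real^'n))"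
      by (rule norm_triangle_ineq)
    also have "\<dots> = \<xi> + \<eta>" using A by simp
    also have "\<dots> < min d1 d2" using A unfolding h_def by simp
    finally show ?thesis .
  qed
  have nq: "dist q x < min d1 d2"
  proof -
    have "dist q x = norm (\<xi>' *\<^sub>R axis j 1 + \<eta>' *\<^sub>R (axis i 1 :: real^'n))"
      unfolding q_def dist_norm by (simp add: algebra_simps)
    also have "\<dots> \<le> norm (\<xi>' *\<^sub>R (axis j 1 :: real^'n)) + norm (\<eta>' *\<^sub>R (axis i 1 :: real^'n))"
      by (rule norm_triangle_ineq)
    also have "\<dots> = \<xi>' + \<eta>'" using B by simp
    also have "\<dots> < min d1 d2" using B unfolding h_def by simp
    finally show ?thesis .
  qed
  have "dist (hess_at f p i j) (hess_at f x i j) < D/2" using d1(2) np by simp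
  moreover have "dist (hess_at f q j i) (hess_at f x j i) < D/2" using d2(2) nq by simp
  ultimately show False using eq unfolding D_def dist_real_def by argo
qed



definition coord1 :: "real^2^2 \<Rightarrow> real^2 \<Rightarrow> real" where
  "coord1 A x = (A$2$2 * x$1 - A$1$2 * x$2) / det A"

lemma rot_comp: "(rot2 t *v r)$1 = cos t * r$1 - sin t * r$2" "(rot2 t *v r)$2 = sin t * r$1 + cos t * r$2"
  by (simp_all add: rot2_def matrix_vector_mult_def sum_2)

lemma rot_inj: assumes "rot2 t *v x = rot2 t *v y" shows "x = y"
proof -
  have e1: "cos t * x$1 - sin t * x$2 = cos t * y$1 - sin t * y$2"
    using arg_cong[OF assms, of "\<lambda>v. v$1"] by (simp add: rot_comp)
  have e2: "sin t * x$1 + cos t * x$2 = sin t * y$1 + cos t * y$2"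
    using arg_cong[OF assms, of "\<lambda>v. v$2"] by (simp add: rot_comp)
  have k1: "cos t * (cos t * a - sin t * b) + sin t * (sin t * a + cos t * b) = (sin t ^ 2 + cos t ^ 2) * a" for a b
    by algebra
  have k2: "cos t * (sin t * a + cos t * b) - sin t * (cos t * a - sin t * b) = (sin t ^ 2 + cos t ^ 2) * b" for a b
    by algebra
  have "x$1 = y$1" using k1[of "x$1" "x$2"] k1[of "y$1" "y$2"] e1 e2 by simp
  moreover have "x$2 = y$2" using k2[of "x$1" "x$2"] k2[of "y$1" "y$2"] e1 e2 by simp
  ultimately show ?thesis by (simp add: vec_eq_iff forall_2)
qed

lemma bilin:
  fixes h :: "'r::finite \<Rightarrow> 'r \<Rightarrow> real"
  shows "(\<Sum>p\<in>UNIV. \<Sum>q\<in>UNIV. h p q * (\<alpha> * x p + \<beta> * y p) * (\<gamma> * x q + \<delta> * y q)) =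
    \<alpha>*\<gamma>*(\<Sum>p\<in>UNIV. \<Sum>q\<in>UNIV. h p q * x p * x q) + \<alpha>*\<delta>*(\<Sum>p\<in>UNIV. \<Sum>q\<in>UNIV. h p q * x p * y q)
    + \<beta>*\<gamma>*(\<Sum>p\<in>UNIV. \<Sum>q\<in>UNIV. h p q * y p * x q) + \<beta>*\<delta>*(\<Sum>p\<in>UNIV. \<Sum>q\<in>UNIV. h p q * y p * y q)"
  by (simp add: algebra_simps sum.distrib sum_distrib_left)



definition Ufun :: "real \<Rightarrow> real \<Rightarrow> real \<Rightarrow> real \<Rightarrow> real" where
  "Ufun N L x y = max 0 (min (N - \<bar>x\<bar>) (L - \<bar>y\<bar>))"

lemma max0_lip: "\<bar>max 0 (s::real) - max 0 t\<bar> \<le> \<bar>s - t\<bar>"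
  by (simp add: max_def abs_if)

lemma min_lip: "\<bar>min (p::real) q - min p' q'\<bar> \<le> \<bar>p - p'\<bar> + \<bar>q - q'\<bar>"
  by (simp add: min_def abs_if)

lemma abs_lip: "\<bar>(N - \<bar>x + a\<bar>) - (N - \<bar>x\<bar>)\<bar> \<le> \<bar>a::real\<bar>"
  by (simp add: abs_if)

lemma Ulip: "\<bar>Ufun N L (x + a) (y + b) - Ufun N L x y\<bar> \<le> \<bar>a\<bar> + \<bar>b\<bar>"
proof -
  have "\<bar>Ufun N L (x + a) (y + b) - Ufun N L x y\<bar> \<le>
     \<bar>min (N - \<bar>x + a\<bar>) (L - \<bar>y + b\<bar>) - min (N - \<bar>x\<bar>) (L - \<bar>y\<bar>)\<bar>"
    unfolding Ufun_def by (rule max0_lip)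
  also have "\<dots> \<le> \<bar>(N - \<bar>x + a\<bar>) - (N - \<bar>x\<bar>)\<bar> + \<bar>(L - \<bar>y + b\<bar>) - (L - \<bar>y\<bar>)\<bar>"
    by (rule min_lip)
  also have "\<dots> \<le> \<bar>a\<bar> + \<bar>b\<bar>" using abs_lip[of N x a] abs_lip[of L y b] by linarith
  finally show ?thesis .
qed

lemma Uval: assumes "\<bar>x\<bar> \<le> N" "\<bar>y\<bar> \<le> L - N" shows "Ufun N L x y = N - \<bar>x\<bar>"
proof -
  have "N - \<bar>x\<bar> \<le> L - \<bar>y\<bar>" using assms by linarith
  hence "min (N - \<bar>x\<bar>) (L - \<bar>y\<bar>) = N - \<bar>x\<bar>" by (simp add: min_def)
  thus ?thesis unfolding Ufun_def using assms by (simp add: max_def)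
qed

lemma Uzero1: "\<bar>x\<bar> \<ge> N \<Longrightarrow> Ufun N L x y = 0"
  unfolding Ufun_def by (simp add: min_def max_def)

lemma Uzero2: "\<bar>y\<bar> \<ge> L \<Longrightarrow> Ufun N L x y = 0"
  unfolding Ufun_def by (simp add: min_def max_def)

lemma lat_sum:
  fixes F :: "'b \<Rightarrow> real" and \<iota> :: "'a \<Rightarrow> 'b"
  assumes inj: "inj \<iota>" and fin: "finite B" and z: "\<And>z. z \<notin> B \<Longrightarrow> F (\<iota> z) = 0"
  shows "F summable_on range \<iota>" "infsum F (range \<iota>) = (\<Sum>z\<in>B. F (\<iota> z))"
proof -
  have "(F \<circ> \<iota>) summable_on UNIV \<longleftrightarrow> (F \<circ> \<iota>) summable_on B"
    by (rule summable_on_cong_neutral) (use z in auto)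
  hence "(F \<circ> \<iota>) summable_on UNIV" using fin by simp
  thus "F summable_on range \<iota>" using summable_on_reindex[of \<iota> UNIV F] inj by simp
  have "infsum (F \<circ> \<iota>) UNIV = infsum (F \<circ> \<iota>) B"
    by (rule infsum_cong_neutral) (use z in auto)
  thus "infsum F (range \<iota>) = (\<Sum>z\<in>B. F (\<iota> z))" using infsum_reindex[of \<iota> UNIV F] inj fin by simp
qed

lemma asym:
  fixes K e C :: real
  assumes "e > 0" "C \<ge> 0"
  shows "\<exists>x0. \<forall>x\<ge>x0. C * ((2*(x+K)+1)*(2*(x^2+K)+1)) < (e + C) * (2*(x-2*K+1)*(2*(x^2-x-K)+1))"
proof -
  have lim: "((\<lambda>x::real. ((2*(x+K)+1)*(2*(x^2+K)+1)) / (2*(x-2*K+1)*(2*(x^2-x-K)+1))) \<longlongrightarrow> 1) at_top"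
    by real_asymp
  have pos: "eventually (\<lambda>x::real. 0 < 2*(x-2*K+1)*(2*(x^2-x-K)+1)) at_top"
    by real_asymp
  have "((\<lambda>x::real. C * (((2*(x+K)+1)*(2*(x^2+K)+1)) / (2*(x-2*K+1)*(2*(x^2-x-K)+1)))) \<longlongrightarrow> C * 1) at_top"
    by (intro tendsto_mult lim tendsto_const)
  hence "eventually (\<lambda>x::real. C * (((2*(x+K)+1)*(2*(x^2+K)+1)) / (2*(x-2*K+1)*(2*(x^2-x-K)+1))) < e + C) at_top"
    using assms by (intro order_tendstoD) auto
  hence "eventually (\<lambda>x::real. C * ((2*(x+K)+1)*(2*(x^2+K)+1)) < (e + C) * (2*(x-2*K+1)*(2*(x^2-x-K)+1))) at_top"
    using pos
  proof eventually_elim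
    case (elim x)
    thus ?case by (simp add: field_simps)
  qed
  thus ?thesis unfolding eventually_at_top_linorder by blast
qed



lemma core_ineq2:
  fixes A :: "real^2^2" and \<rho> :: "'r::finite \<Rightarrow> real^2" and H :: "'r \<Rightarrow> 'r \<Rightarrow> real"
  assumes d: "det A \<noteq> 0" and R_sub: "range \<rho> \<subseteq> lattice A" and c0: "c\<^sub>0 > 0"
    and stable: "\<forall>u::real^2 \<Rightarrow> real.
        (\<lambda>x. \<Sum>i\<in>UNIV. (fdiff (\<rho> i) u x)\<^sup>2) summable_on lattice A \<longrightarrow>
        (\<Sum>\<^sub>\<infinity>x\<in>lattice A. \<Sum>i\<in>UNIV. \<Sum>j\<in>UNIV.
             H i j * fdiff (\<rho> i) u x * fdiff (\<rho> j) u x)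
        \<ge> c\<^sub>0 * (\<Sum>\<^sub>\<infinity>x\<in>lattice A. \<Sum>i\<in>UNIV. (fdiff (\<rho> i) u x)\<^sup>2)"
  shows "(\<Sum>p\<in>UNIV. \<Sum>q\<in>UNIV. H p q * coord1 A (\<rho> p) * coord1 A (\<rho> q)) \<ge> c\<^sub>0 * (\<Sum>p\<in>UNIV. (coord1 A (\<rho> p))\<^sup>2)"
proof -
  define \<iota> :: "int \<times> int \<Rightarrow> real^2" where "\<iota> = (\<lambda>z. A *v vector [of_int (fst z), of_int (snd z)])"
  define co2 where "co2 = (\<lambda>x::real^2. (A$1$1 * x$2 - A$2$1 * x$1) / det A)"
  have dd: "A$1$1 * A$2$2 - A$1$2 * A$2$1 \<noteq> 0" using d by (simp add: det_2)
  have \<iota>c: "\<And>m n. (\<iota> (m,n))$1 = A$1$1 * of_int m + A$1$2 * of_int n"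
              "\<And>m n. (\<iota> (m,n))$2 = A$2$1 * of_int m + A$2$2 * of_int n"
    by (simp_all add: \<iota>_def matrix_vector_mult_def sum_2)
  have c1\<iota>: "\<And>m n. coord1 A (\<iota> (m,n)) = of_int m"
  proof -
    fix m n
    have "A$2$2 * (A$1$1 * of_int m + A$1$2 * of_int n) - A$1$2 * (A$2$1 * of_int m + A$2$2 * of_int n)
        = (A$1$1 * A$2$2 - A$1$2 * A$2$1) * of_int m" by algebra
    thus "coord1 A (\<iota> (m,n)) = of_int m" unfolding coord1_def \<iota>c det_2 using dd by simp
  qed
  have c2\<iota>: "\<And>m n. co2 (\<iota> (m,n)) = of_int n"
  proof -
    fix m n
    have "A$1$1 * (A$2$1 * of_int m + A$2$2 * of_int n) - A$2$1 * (A$1$1 * of_int m + A$1$2 * of_int n)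
        = (A$1$1 * A$2$2 - A$1$2 * A$2$1) * of_int n" by algebra
    thus "co2 (\<iota> (m,n)) = of_int n" unfolding co2_def \<iota>c det_2 using dd by simp
  qed
  have \<iota>add: "\<And>m n m' n'. \<iota> (m,n) + \<iota> (m',n') = \<iota> (m+m', n+n')"
    by (simp add: vec_eq_iff forall_2 \<iota>c algebra_simps)
  have \<iota>inj: "inj \<iota>"
  proof (rule injI)
    fix z w assume "\<iota> z = \<iota> w"
    hence "coord1 A (\<iota> (fst z, snd z)) = coord1 A (\<iota> (fst w, snd w))"
          "co2 (\<iota> (fst z, snd z)) = co2 (\<iota> (fst w, snd w))" by simp_all
    thus "z = w" unfolding c1\<iota> c2\<iota> by (simp add: prod_eq_iff)
  qed
  have latt: "lattice A = range \<iota>"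
  proof -
    have "\<And>z::int^2. (\<chi> i. real_of_int (z $ i)) = vector [of_int (z$1), of_int (z$2)]"
      by (simp add: vec_eq_iff forall_2)
    hence 1: "\<And>z::int^2. A *v (\<chi> i. real_of_int (z $ i)) = \<iota> (z$1, z$2)" by (simp add: \<iota>_def)
    have 2: "\<And>m n. \<iota> (m, n) = A *v (\<chi> i. real_of_int ((vector [m, n] :: int^2) $ i))"
      using 1 by simp
    show ?thesis unfolding lattice_def
    proof
      show "range (\<lambda>z::int^2. A *v (\<chi> i. real_of_int (z $ i))) \<subseteq> range \<iota>" using 1 by auto
      show "range \<iota> \<subseteq> range (\<lambda>z::int^2. A *v (\<chi> i. real_of_int (z $ i)))"
      proof
        fix x assume "x \<in> range \<iota>"
        then obtain m n where "x = \<iota> (m,n)" by auto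
        thus "x \<in> range (\<lambda>z::int^2. A *v (\<chi> i. real_of_int (z $ i)))" using 2 by blast
      qed
    qed
  qed
  have "\<forall>p. \<exists>z. \<rho> p = \<iota> z" using R_sub latt by blast
  then obtain ab where ab: "\<And>p. \<rho> p = \<iota> (ab p)" by metis
  define a where "a = (\<lambda>p. fst (ab p))"
  define b where "b = (\<lambda>p. snd (ab p))"
  have \<rho>ab: "\<And>p. \<rho> p = \<iota> (a p, b p)" using ab unfolding a_def b_def by simp
  have coa: "\<And>p. coord1 A (\<rho> p) = of_int (a p)" using \<rho>ab c1\<iota> by simp
  define ar where "ar = (\<lambda>p. real_of_int (a p))"
  define K :: int where "K = 1 + (\<Sum>p\<in>UNIV. \<bar>a p\<bar> + \<bar>b p\<bar>)"
  have aK: "\<And>p. \<bar>a p\<bar> + \<bar>b p\<bar> \<le> K - 1"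
  proof -
    fix p
    have "\<bar>a p\<bar> + \<bar>b p\<bar> \<le> (\<Sum>p\<in>UNIV. \<bar>a p\<bar> + \<bar>b p\<bar>)"
      by (rule member_le_sum) auto
    thus "\<bar>a p\<bar> + \<bar>b p\<bar> \<le> K - 1" unfolding K_def by simp
  qed
  have K1: "K \<ge> 1" unfolding K_def by (simp add: sum_nonneg)
  define \<Phi> where "\<Phi> = (\<lambda>v::'r \<Rightarrow> real. (\<Sum>i\<in>UNIV. \<Sum>j\<in>UNIV. H i j * v i * v j) - c\<^sub>0 * (\<Sum>i\<in>UNIV. (v i)\<^sup>2))"
  have goal_eq: "?thesis \<longleftrightarrow> \<Phi> ar \<ge> 0" unfolding \<Phi>_def coa ar_def by simp
  define SH where "SH = (\<Sum>i\<in>UNIV. \<Sum>j\<in>UNIV. \<bar>H i j\<bar>)"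
  define C where "C = SH * (real_of_int K)\<^sup>2"
  have C0: "C \<ge> 0" unfolding C_def SH_def by (simp add: sum_nonneg)
  have \<Phi>bound: "\<And>v::'r \<Rightarrow> real. (\<And>i. \<bar>v i\<bar> \<le> real_of_int K) \<Longrightarrow> \<Phi> v \<le> C"
  proof -
    fix v :: "'r \<Rightarrow> real" assume vb: "\<And>i. \<bar>v i\<bar> \<le> real_of_int K"
    have "(\<Sum>i\<in>UNIV. \<Sum>j\<in>UNIV. H i j * v i * v j) \<le> (\<Sum>i\<in>UNIV. \<Sum>j\<in>UNIV. \<bar>H i j\<bar> * (real_of_int K)\<^sup>2)"
    proof (intro sum_mono)
      fix i j
      have "\<bar>v i * v j\<bar> \<le> real_of_int K * real_of_int K"
        unfolding abs_mult using vb[of i] vb[of j] by (intro mult_mono) auto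
      hence "H i j * v i * v j \<le> \<bar>H i j\<bar> * \<bar>v i * v j\<bar>"
        by (metis abs_ge_self abs_mult mult.assoc)
      also have "\<dots> \<le> \<bar>H i j\<bar> * (real_of_int K)\<^sup>2"
        using \<open>\<bar>v i * v j\<bar> \<le> _\<close> by (intro mult_left_mono) (auto simp: power2_eq_square)
      finally show "H i j * v i * v j \<le> \<bar>H i j\<bar> * (real_of_int K)\<^sup>2" .
    qed
    also have "\<dots> = C" unfolding C_def SH_def by (simp add: sum_distrib_right)
    finally have 1: "(\<Sum>i\<in>UNIV. \<Sum>j\<in>UNIV. H i j * v i * v j) \<le> C" .
    have "c\<^sub>0 * (\<Sum>i\<in>UNIV. (v i)\<^sup>2) \<ge> 0" using c0 by (simp add: sum_nonneg)
    thus "\<Phi> v \<le> C" unfolding \<Phi>_def using 1 by linarith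
  qed
  show ?thesis unfolding goal_eq
  proof (rule ccontr)
    assume "\<not> 0 \<le> \<Phi> ar"
    define e where "e = - \<Phi> ar"
    have e0: "e > 0" using \<open>\<not> 0 \<le> \<Phi> ar\<close> unfolding e_def by simp
    obtain x0 where x0: "\<And>x. x \<ge> x0 \<Longrightarrow> C * ((2*(x+real_of_int K)+1)*(2*(x^2+real_of_int K)+1))
        < (e + C) * (2*(x-2*real_of_int K+1)*(2*(x^2-x-real_of_int K)+1))"
      using asym[OF e0 C0, of "real_of_int K"] by blast
    define N :: int where "N = max \<lceil>x0\<rceil> (2*K+2)"
    define L :: int where "L = N^2"
    have NK: "N \<ge> 2*K+2" unfolding N_def by simp
    have Nx: "real_of_int N \<ge> x0" unfolding N_def
      by (metis le_of_int_ceiling max.cobounded1 of_int_le_iff order_trans)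
    have "N * N \<ge> 2 * N" using NK K1 by (intro mult_right_mono) auto
    hence LNK: "L - N - K \<ge> 0" unfolding L_def power2_eq_square using NK K1 by linarith
    define u where "u = (\<lambda>x. Ufun (of_int N) (of_int L) (coord1 A x) (co2 x))"
    define D where "D = (\<lambda>z i. fdiff (\<rho> i) u (\<iota> z))"
    have Dform: "\<And>m n i. D (m,n) i = Ufun N L (of_int (m + a i)) (of_int (n + b i)) - Ufun N L (of_int m) (of_int n)"
      unfolding D_def fdiff_def u_def \<rho>ab \<iota>add c1\<iota> c2\<iota> by simp
    define Box where "Box = {-(N+K)..N+K} \<times> {-(L+K)..L+K}"
    have finBox: "finite Box" unfolding Box_def by simp
    have Dzero: "\<And>z i. z \<notin> Box \<Longrightarrow> D z i = 0"
    proof -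
      fix z i assume "z \<notin> Box"
      obtain m n where z: "z = (m,n)" by fastforce
      have ai: "\<bar>a i\<bar> \<le> K" "\<bar>b i\<bar> \<le> K" using aK[of i] by auto
      from \<open>z \<notin> Box\<close> have "\<bar>m\<bar> > N + K \<or> \<bar>n\<bar> > L + K" unfolding z Box_def by auto
      thus "D z i = 0"
      proof
        assume "\<bar>m\<bar> > N + K"
        hence "\<bar>m + a i\<bar> \<ge> N" "\<bar>m\<bar> \<ge> N" using ai K1 by auto
        hence "\<bar>real_of_int (m + a i)\<bar> \<ge> real_of_int N" "\<bar>real_of_int m\<bar> \<ge> real_of_int N"
          by (metis of_int_abs of_int_le_iff)+
        thus "D z i = 0" unfolding z Dform by (simp add: Uzero1)
      next
        assume "\<bar>n\<bar> > L + K"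
        hence "\<bar>n + b i\<bar> \<ge> L" "\<bar>n\<bar> \<ge> L" using ai K1 by auto
        hence "\<bar>real_of_int (n + b i)\<bar> \<ge> real_of_int L" "\<bar>real_of_int n\<bar> \<ge> real_of_int L"
          by (metis of_int_abs of_int_le_iff)+
        thus "D z i = 0" unfolding z Dform by (simp add: Uzero2)
      qed
    qed
    have Dlip: "\<And>z i. \<bar>D z i\<bar> \<le> real_of_int K"
    proof -
      fix z :: "int \<times> int" and i :: 'r
      obtain m n where z: "z = (m,n)" by fastforce
      have "\<bar>D z i\<bar> \<le> \<bar>real_of_int (a i)\<bar> + \<bar>real_of_int (b i)\<bar>"
        unfolding z Dform of_int_add by (rule Ulip)
      also have "\<dots> \<le> real_of_int K"
      proof -
        have "\<bar>a i\<bar> + \<bar>b i\<bar> \<le> K" using aK[of i] by linarith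
        hence "real_of_int (\<bar>a i\<bar> + \<bar>b i\<bar>) \<le> real_of_int K" by (simp only: of_int_le_iff)
        thus ?thesis by simp
      qed
      finally show "\<bar>D z i\<bar> \<le> real_of_int K" .
    qed
    define G1 where "G1 = {K..N-K} \<union> {-(N-K)..-K}"
    define G2 where "G2 = {-(L-N-K)..L-N-K}"
    define G where "G = G1 \<times> G2"
    have Dgood: "\<And>z. z \<in> G \<Longrightarrow> \<Phi> (D z) = \<Phi> ar"
    proof -
      fix z assume "z \<in> G"
      then obtain m n where z: "z = (m,n)" and m: "m \<in> G1" and n: "n \<in> G2" unfolding G_def by auto
      have Dv: "D z i = real_of_int (\<bar>m\<bar> - \<bar>m + a i\<bar>)" for i
      proof -
        have ai: "\<bar>a i\<bar> \<le> K" "\<bar>b i\<bar> \<le> K" using aK[of i] by auto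
        have m1: "\<bar>m\<bar> \<le> N - K" "\<bar>m\<bar> \<ge> K" using m K1 unfolding G1_def by auto
        have n1: "\<bar>n\<bar> \<le> L - N - K" using n unfolding G2_def by auto
        have "\<bar>m + a i\<bar> \<le> N" "\<bar>n + b i\<bar> \<le> L - N" "\<bar>m\<bar> \<le> N" "\<bar>n\<bar> \<le> L - N"
          using ai m1 n1 K1 by auto
        hence "\<bar>real_of_int (m + a i)\<bar> \<le> real_of_int N" "\<bar>real_of_int (n + b i)\<bar> \<le> real_of_int L - real_of_int N"
              "\<bar>real_of_int m\<bar> \<le> real_of_int N" "\<bar>real_of_int n\<bar> \<le> real_of_int L - real_of_int N"
          by (metis of_int_abs of_int_le_iff of_int_diff)+
        thus ?thesis unfolding z Dform by (simp add: Uval)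
      qed
      have m2: "m \<ge> K \<or> m \<le> -K" using m unfolding G1_def by auto
      thus "\<Phi> (D z) = \<Phi> ar"
      proof
        assume mK: "m \<ge> K"
        have "\<And>i. \<bar>m\<bar> - \<bar>m + a i\<bar> = - a i" using mK aK K1
          by (smt (verit, best) abs_le_iff)
        hence "D z = (\<lambda>i. - ar i)" using Dv unfolding ar_def by (auto simp: fun_eq_iff)
        thus ?thesis unfolding \<Phi>_def by simp
      next
        assume mK: "m \<le> -K"
        have "\<And>i. \<bar>m\<bar> - \<bar>m + a i\<bar> = a i" using mK aK K1
          by (smt (verit, best) abs_le_iff)
        hence "D z = ar" using Dv unfolding ar_def by (auto simp: fun_eq_iff)
        thus ?thesis by simp
      qed
    qed
    define F1 where "F1 = (\<lambda>x. \<Sum>i\<in>UNIV. (fdiff (\<rho> i) u x)\<^sup>2)"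
    define F2 where "F2 = (\<lambda>x. \<Sum>i\<in>UNIV. \<Sum>j\<in>UNIV. H i j * fdiff (\<rho> i) u x * fdiff (\<rho> j) u x)"
    have F1z: "\<And>z. z \<notin> Box \<Longrightarrow> F1 (\<iota> z) = 0" unfolding F1_def using Dzero unfolding D_def by simp
    have F2z: "\<And>z. z \<notin> Box \<Longrightarrow> F2 (\<iota> z) = 0" unfolding F2_def using Dzero unfolding D_def by simp
    have s1: "F1 summable_on lattice A" unfolding latt by (rule lat_sum(1)[of \<iota> Box F1, OF \<iota>inj finBox F1z])
    have i1: "infsum F1 (lattice A) = (\<Sum>z\<in>Box. F1 (\<iota> z))" unfolding latt by (rule lat_sum(2)[of \<iota> Box F1, OF \<iota>inj finBox F1z])
    have i2: "infsum F2 (lattice A) = (\<Sum>z\<in>Box. F2 (\<iota> z))" unfolding latt by (rule lat_sum(2)[of \<iota> Box F2, OF \<iota>inj finBox F2z])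
    have st: "infsum F2 (lattice A) \<ge> c\<^sub>0 * infsum F1 (lattice A)"
      using stable s1 unfolding F1_def F2_def by blast
    have GB: "G \<subseteq> Box" unfolding G_def G1_def G2_def Box_def using K1 NK LNK by auto
    have "0 \<le> (\<Sum>z\<in>Box. F2 (\<iota> z)) - c\<^sub>0 * (\<Sum>z\<in>Box. F1 (\<iota> z))" using st i1 i2 by simp
    also have "\<dots> = (\<Sum>z\<in>Box. \<Phi> (D z))"
      unfolding \<Phi>_def F1_def F2_def D_def by (simp add: sum_subtractf sum_distrib_left)
    also have "\<dots> = (\<Sum>z\<in>Box - G. \<Phi> (D z)) + (\<Sum>z\<in>G. \<Phi> (D z))" by (rule sum.subset_diff[OF GB finBox])
    also have "(\<Sum>z\<in>G. \<Phi> (D z)) = real (card G) * \<Phi> ar" using Dgood by simp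
    also have "(\<Sum>z\<in>Box - G. \<Phi> (D z)) \<le> real (card (Box - G)) * C"
      by (rule sum_bounded_above) (use \<Phi>bound Dlip in auto)
    finally have ineq: "0 \<le> real (card (Box - G)) * C - real (card G) * e" unfolding e_def by simp
    have cBG: "card G \<le> card Box" using GB finBox by (rule card_mono[rotated])
    have "card (Box - G) = card Box - card G" using GB finBox by (intro card_Diff_subset) (auto intro: finite_subset)
    hence cD: "real (card (Box - G)) = real (card Box) - real (card G)" using cBG by simp
    define x where "x = real_of_int N"
    define k where "k = real_of_int K"
    have xL: "real_of_int L = x^2" unfolding L_def x_def by simp
    have p1: "0 \<le> 2*(N+K)+1" "0 \<le> 2*(L+K)+1" "0 \<le> N - 2*K + 1" "0 \<le> 2*(L-N-K)+1"
      using K1 NK LNK by auto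
    have "card Box = nat (2*(N+K)+1) * nat (2*(L+K)+1)"
      unfolding Box_def card_cartesian_product card_atLeastAtMost_int by (simp add: algebra_simps)
    hence "int (card Box) = (2*(N+K)+1) * (2*(L+K)+1)" using p1 by simp
    hence "real (card Box) = real_of_int ((2*(N+K)+1) * (2*(L+K)+1))"
      by (metis of_int_of_nat_eq)
    hence cB: "real (card Box) = (2*(x+k)+1)*(2*(x^2+k)+1)"
      unfolding x_def k_def xL[symmetric] by (simp add: L_def)
    have G1d: "{K..N-K} \<inter> {-(N-K)..-K} = {}" using K1 by auto
    have cG1: "card G1 = nat (N - 2*K + 1) + nat (N - 2*K + 1)"
      unfolding G1_def by (subst card_Un_disjoint) (use G1d in \<open>auto simp: algebra_simps\<close>)
    have "card G = (nat (N - 2*K + 1) + nat (N - 2*K + 1)) * nat (2*(L-N-K)+1)"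
      unfolding G_def card_cartesian_product cG1 G2_def card_atLeastAtMost_int by (simp add: algebra_simps)
    hence "int (card G) = 2*(N-2*K+1)*(2*(L-N-K)+1)" using p1 by simp
    hence "real (card G) = real_of_int (2*(N-2*K+1)*(2*(L-N-K)+1))"
      by (metis of_int_of_nat_eq)
    hence cG: "real (card G) = 2*(x-2*k+1)*(2*(x^2-x-k)+1)"
      unfolding x_def k_def xL[symmetric] by (simp add: L_def)
    have "C * ((2*(x+k)+1)*(2*(x^2+k)+1)) < (e + C) * (2*(x-2*k+1)*(2*(x^2-x-k)+1))"
      using x0[OF Nx] unfolding x_def k_def .
    thus False using ineq unfolding cD cB cG by (simp add: algebra_simps)
  qed
qed

lemma nonzero_coord2:
  fixes A :: "real^2^2" and \<rho> :: "'r::finite \<Rightarrow> real^2"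
  assumes d: "det A \<noteq> 0" and R_span: "int_span (range \<rho>) = lattice A"
  shows "\<exists>p. coord1 A (\<rho> p) \<noteq> 0"
proof (rule ccontr)
  assume "\<not> ?thesis"
  hence z: "\<And>p. coord1 A (\<rho> p) = 0" by auto
  define e where "e = A *v (\<chi> i. real_of_int ((axis 1 (1::int)) $ i))"
  have "e \<in> lattice A" unfolding lattice_def e_def by blast
  hence "e \<in> int_span (range \<rho>)" using R_span by simp
  then obtain c where ce: "e = (\<Sum>r\<in>range \<rho>. of_int (c r) *\<^sub>R r)" unfolding int_span_def by blast
  have lin: "coord1 A (\<Sum>r\<in>S. of_int (c r) *\<^sub>R r) = (\<Sum>r\<in>S. of_int (c r) * coord1 A r)" for S :: "(real^2) set"
    by (simp add: coord1_def sum_distrib_left sum_subtractf sum_divide_distrib algebra_simps)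
       (simp only: sum_divide_distrib[symmetric] sum_subtractf)
  have "coord1 A e = (\<Sum>r\<in>range \<rho>. of_int (c r) * coord1 A r)" unfolding ce lin ..
  also have "\<dots> = 0" using z by (intro sum.neutral) auto
  finally have 0: "coord1 A e = 0" .
  have "e$1 = A$1$1" "e$2 = A$2$1" by (simp_all add: e_def matrix_vector_mult_def sum_2 axis_def)
  hence "coord1 A e = 1" using d unfolding coord1_def det_2 by (simp add: mult.commute)
  thus False using 0 by simp
qed



theorem corollary5p4:
  fixes A Q :: "real^2^2"
    and \<rho> :: "'r::finite \<Rightarrow> real^2"
    and V :: "real^'r \<Rightarrow> real"
    and p c\<^sub>0 :: real
  assumes lat: "(A = A_square \<and> Q = rot2 (pi/2)) \<or> (A = A_tri \<and> Q = rot2 (2*pi/3))"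
    and inj: "inj \<rho>"
    and R_sub: "range \<rho> \<subseteq> lattice A - {0}"
    and R_span: "int_span (range \<rho>) = lattice A"
    and R_rot: "(\<lambda>r. Q *v r) ` range \<rho> = range \<rho>"
    and V_C6: "Ck 6 V"
    and V_sym: "\<forall>a. V a = V (\<chi> i. a $ (inv \<rho> (Q *v \<rho> i)))"
    and p_pos: "p > 0"
    and V_per: "\<forall>i. (\<forall>a. V (a + p *\<^sub>R axis i 1) = V a) \<and>
                    (\<forall>q. 0 < q \<and> q < p \<longrightarrow> \<not> (\<forall>a. V (a + q *\<^sub>R axis i 1) = V a))"
    and c0_pos: "c\<^sub>0 > 0"
    and stable: "\<forall>u::real^2 \<Rightarrow> real.
        (\<lambda>x. \<Sum>i\<in>UNIV. (fdiff (\<rho> i) u x)\<^sup>2) summable_on lattice A \<longrightarrow>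
        (\<Sum>\<^sub>\<infinity>x\<in>lattice A. \<Sum>i\<in>UNIV. \<Sum>j\<in>UNIV.
             hess_at V 0 i j * fdiff (\<rho> i) u x * fdiff (\<rho> j) u x)
        \<ge> c\<^sub>0 * (\<Sum>\<^sub>\<infinity>x\<in>lattice A. \<Sum>i\<in>UNIV. (fdiff (\<rho> i) u x)\<^sup>2)"
  defines "W \<equiv> (\<lambda>F::real^2. V (\<chi> i. F \<bullet> \<rho> i) / det A)"
  shows "\<exists>c\<^sub>l\<^sub>i\<^sub>n > 0. (\<forall>k l. hess_at W 0 k l = (if k = l then c\<^sub>l\<^sub>i\<^sub>n else 0)) \<and>
           (\<forall>u::real^2 \<Rightarrow> real. twice_differentiable u \<longrightarrow>
              (\<forall>x. - (\<Sum>k\<in>UNIV. pderiv_at (\<lambda>y. \<Sum>l\<in>UNIV. hess_at W 0 k l * pderiv_at u l y) k x)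
                   = - c\<^sub>l\<^sub>i\<^sub>n * (\<Sum>k\<in>UNIV. hess_at u x k k)))"
proof -
  have C6: "Ck (Suc (Suc (Suc 3))) V" using V_C6 by (simp add: eval_nat_numeral)
  have dV: "\<And>y. V differentiable (at y)" using C6 unfolding Ck.simps by blast
  have C5: "\<And>p. Ck (Suc (Suc 3)) (pderiv_at V p)" using C6 unfolding Ck.simps by blast
  have dV1: "\<And>p y. pderiv_at V p differentiable (at y)" using C5 unfolding Ck.simps by blast
  have C4: "\<And>p q. continuous_on UNIV (pderiv_at (pderiv_at V p) q)" using C5 unfolding Ck.simps by blast
  have cV2: "\<And>p q y. continuous (at y) (\<lambda>y. hess_at V y p q)"
  proof -
    fix p q y
    have "continuous_on UNIV (pderiv_at (pderiv_at V p) q)" using C4 .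
    hence "isCont (pderiv_at (pderiv_at V p) q) y" using continuous_on_eq_continuous_at[OF open_UNIV] by blast
    thus "continuous (at y) (\<lambda>y. hess_at V y p q)" unfolding hess_at_def by (simp add: eta_contract_eq)
  qed
  define h where "h = (\<lambda>p q. hess_at V 0 p q)"
  have hsym: "\<And>p q. h p q = h q p"
    unfolding h_def by (intro schwarz dV dV1 cV2)
  have detA: "det A > 0"
    using lat by (auto simp: det_2 A_square_def A_tri_def mat_def)
  define d where "d = det A"
  define L :: "real^2^'r" where "L = (\<chi> i. \<rho> i)"
  define VL where "VL = (\<lambda>F. V (L *v F))"
  have Weq: "W = (\<lambda>F. VL F / d)"
  proof
    fix F
    have "(\<chi> i. F \<bullet> \<rho> i) = L *v F"
      by (simp add: vec_eq_iff matrix_vector_mul_component L_def inner_commute)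
    thus "W F = VL F / d" unfolding W_def d_def VL_def by simp
  qed
  have dVL: "\<And>y. VL differentiable (at y)" unfolding VL_def by (intro differentiable_comp_mat dV)
  have pVL: "\<And>k. pderiv_at VL k = (\<lambda>y. \<Sum>p\<in>UNIV. (L *v axis k 1)$p * pderiv_at V p (L *v y))"
    unfolding VL_def by (intro pderiv_comp_mat_fun dV)
  have dpVL: "\<And>k y. pderiv_at VL k differentiable (at y)"
    unfolding pVL by (intro differentiable_lin_comb differentiable_comp_mat dV1) auto
  have Lax: "\<And>k p. (L *v axis k 1)$p = \<rho> p $ k"
    by (simp add: matrix_vector_mul_component L_def inner_axis)
  have hessW: "hess_at W 0 k l = (\<Sum>p\<in>UNIV. \<Sum>q\<in>UNIV. \<rho> p $ k * \<rho> q $ l * h p q) / d" for k l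
  proof -
    have pW: "pderiv_at W k = (\<lambda>y. pderiv_at VL k y / d)"
      unfolding Weq by (rule ext, rule pderiv_div[OF dVL])
    have "hess_at W 0 k l = pderiv_at (pderiv_at VL k) l 0 / d"
      unfolding hess_at_def pW by (rule pderiv_div[OF dpVL])
    also have "pderiv_at (pderiv_at VL k) l 0 = hess_at VL 0 k l" unfolding hess_at_def ..
    also have "\<dots> = (\<Sum>p\<in>UNIV. \<Sum>q\<in>UNIV. (L *v axis k 1)$p * (L *v axis l 1)$q * hess_at V (L *v 0) p q)"
      unfolding VL_def by (rule hess_comp_mat[OF dV dV1])
    finally show ?thesis by (simp add: Lax h_def)
  qed
  define \<pi> where "\<pi> = (\<lambda>i. inv \<rho> (Q *v \<rho> i))"
  have \<rho>\<pi>: "\<And>i. \<rho> (\<pi> i) = Q *v \<rho> i"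
  proof -
    fix i
    have "Q *v \<rho> i \<in> (\<lambda>r. Q *v r) ` range \<rho>" by blast
    hence "Q *v \<rho> i \<in> range \<rho>" using R_rot by simp
    thus "\<rho> (\<pi> i) = Q *v \<rho> i" unfolding \<pi>_def by (simp add: f_inv_into_f)
  qed
  have Qinj: "\<And>x y. Q *v x = Q *v y \<Longrightarrow> x = y" using lat rot_inj by blast
  have \<pi>inj: "inj \<pi>"
  proof (rule injI)
    fix i j assume "\<pi> i = \<pi> j"
    hence "Q *v \<rho> i = Q *v \<rho> j" using \<rho>\<pi> by metis
    hence "\<rho> i = \<rho> j" using Qinj by blast
    thus "i = j" using inj by (meson injD)
  qed
  have \<pi>surj: "surj \<pi>" using \<pi>inj finite_UNIV_inj_surj[of \<pi>] by simp
  have \<pi>bij: "bij_betw \<pi> UNIV UNIV" using \<pi>inj \<pi>surj by (simp add: bij_betw_def)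
  have re: "\<And>F::'r \<Rightarrow> real. (\<Sum>x\<in>UNIV. F (\<pi> x)) = (\<Sum>x\<in>UNIV. F x)"
    using sum.reindex_bij_betw[OF \<pi>bij] by blast
  define P :: "real^'r^'r" where "P = (\<chi> i. axis (\<pi> i) 1)"
  have VP: "V = (\<lambda>a. V (P *v a))"
  proof
    fix a
    have "(\<chi> i. a $ (\<pi> i)) = P *v a"
      by (simp add: vec_eq_iff matrix_vector_mul_component P_def inner_axis')
    moreover have "V a = V (\<chi> i. a $ (\<pi> i))" using V_sym unfolding \<pi>_def by blast
    ultimately show "V a = V (P *v a)" by simp
  qed
  have Pax: "\<And>k p. (P *v axis k 1)$p = (if \<pi> p = k then 1 else 0)"
    by (simp add: matrix_vector_mul_component P_def inner_axis_axis)
  have h\<pi>: "\<And>i j. h (\<pi> i) (\<pi> j) = h i j"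
  proof -
    fix i j
    have "h (\<pi> i) (\<pi> j) = hess_at (\<lambda>a. V (P *v a)) 0 (\<pi> i) (\<pi> j)"
    proof -
      have "hess_at V 0 (\<pi> i) (\<pi> j) = hess_at (\<lambda>a. V (P *v a)) 0 (\<pi> i) (\<pi> j)"
        by (rule arg_cong[OF VP, of "\<lambda>f. hess_at f 0 (\<pi> i) (\<pi> j)"])
      thus ?thesis unfolding h_def .
    qed
    also have "\<dots> = (\<Sum>p\<in>UNIV. \<Sum>q\<in>UNIV. (P *v axis (\<pi> i) 1)$p * (P *v axis (\<pi> j) 1)$q * hess_at V (P *v 0) p q)"
      by (rule hess_comp_mat[OF dV dV1])
    also have "\<dots> = (\<Sum>p\<in>UNIV. \<Sum>q\<in>UNIV. (if p = i then 1 else 0) * (if q = j then 1 else 0) * h p q)"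
      by (simp add: Pax inj_eq[OF \<pi>inj] h_def)
    also have "\<dots> = h i j"
    proof -
      have "(\<Sum>q\<in>UNIV. (if p = i then 1 else 0) * (if q = j then 1 else 0) * h p q) = (if p = i then h p j else 0)" for p
        by (cases "p = i") (simp_all add: if_distrib if_distribR cong: if_cong)
      thus ?thesis by simp
    qed
    finally show "h (\<pi> i) (\<pi> j) = h i j" .
  qed
  have Binv: "\<And>f g. (\<Sum>p\<in>UNIV. \<Sum>q\<in>UNIV. h p q * f (Q *v \<rho> p) * g (Q *v \<rho> q)) =
                    (\<Sum>p\<in>UNIV. \<Sum>q\<in>UNIV. h p q * f (\<rho> p) * g (\<rho> q))"
  proof -
    fix f g :: "real^2 \<Rightarrow> real"
    have "(\<Sum>p\<in>UNIV. \<Sum>q\<in>UNIV. h p q * f (Q *v \<rho> p) * g (Q *v \<rho> q)) =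
          (\<Sum>p\<in>UNIV. \<Sum>q\<in>UNIV. h (\<pi> p) (\<pi> q) * f (\<rho> (\<pi> p)) * g (\<rho> (\<pi> q)))"
      by (simp add: h\<pi> \<rho>\<pi>)
    also have "\<dots> = (\<Sum>p\<in>UNIV. \<Sum>q\<in>UNIV. h (\<pi> p) q * f (\<rho> (\<pi> p)) * g (\<rho> q))"
      by (rule sum.cong[OF refl], rule re[of "\<lambda>q. h (\<pi> _) q * f (\<rho> (\<pi> _)) * g (\<rho> q)"])
    also have "\<dots> = (\<Sum>p\<in>UNIV. \<Sum>q\<in>UNIV. h p q * f (\<rho> p) * g (\<rho> q))"
      by (rule re[of "\<lambda>p. \<Sum>q\<in>UNIV. h p q * f (\<rho> p) * g (\<rho> q)"])
    finally show "?thesis f g" .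
  qed
  define X where "X = (\<lambda>p. \<rho> p $ 1)"
  define Y where "Y = (\<lambda>p. \<rho> p $ 2)"
  define b11 where "b11 = (\<Sum>p\<in>UNIV. \<Sum>q\<in>UNIV. h p q * X p * X q)"
  define b12 where "b12 = (\<Sum>p\<in>UNIV. \<Sum>q\<in>UNIV. h p q * X p * Y q)"
  define b21 where "b21 = (\<Sum>p\<in>UNIV. \<Sum>q\<in>UNIV. h p q * Y p * X q)"
  define b22 where "b22 = (\<Sum>p\<in>UNIV. \<Sum>q\<in>UNIV. h p q * Y p * Y q)"
  have b12: "b21 = b12"
  proof -
    have "b21 = (\<Sum>q\<in>UNIV. \<Sum>p\<in>UNIV. h p q * Y p * X q)" unfolding b21_def by (rule sum.swap)
    also have "\<dots> = b12" unfolding b12_def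
      by (intro sum.cong refl) (simp add: hsym[of _ ] mult_ac)
    finally show ?thesis .
  qed
  obtain t where Qt: "Q = rot2 t" using lat by blast
  define c where "c = cos t"
  define s where "s = sin t"
  have Q1: "\<And>r. (Q *v r)$1 = c * r$1 + (- s) * r$2" unfolding Qt c_def s_def by (simp add: rot_comp)
  have Q2: "\<And>r. (Q *v r)$2 = s * r$1 + c * r$2" unfolding Qt c_def s_def by (simp add: rot_comp)
  have E11: "c * c * b11 + c * (-s) * b12 + (-s) * c * b21 + (-s) * (-s) * b22 = b11"
    using Binv[of "\<lambda>r. r$1" "\<lambda>r. r$1"] unfolding Q1 b11_def b12_def b21_def b22_def X_def Y_def bilin .
  have E12: "c * s * b11 + c * c * b12 + (-s) * s * b21 + (-s) * c * b22 = b12"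
    using Binv[of "\<lambda>r. r$1" "\<lambda>r. r$2"] unfolding Q1 Q2 b11_def b12_def b21_def b22_def X_def Y_def bilin .
  have cQ: "c = Q$1$1" "s = Q$2$1" by (simp_all add: Qt c_def s_def rot2_def)
  have bb: "b22 = b11 \<and> b12 = 0"
    using lat
  proof
    assume "A = A_square \<and> Q = rot2 (pi / 2)"
    hence "c = 0" "s = 1" using cQ by (simp_all add: rot2_def)
    thus ?thesis using E11 E12 b12 by simp
  next
    assume "A = A_tri \<and> Q = rot2 (2 * pi / 3)"
    hence Qe: "Q = rot2 (2 * pi / 3)" by simp
    have ang: "2 * pi / 3 = pi - pi / 3" by simp
    have cv: "cos (2 * pi / 3) = -1/2" unfolding ang cos_pi_minus cos_60 by simp
    have sv: "sin (2 * pi / 3) = sqrt 3 / 2" unfolding ang sin_pi_minus sin_60 by simp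
    have cs: "c = -1/2" "s = sqrt 3 / 2" using cQ unfolding Qe by (simp_all add: rot2_def cv sv)
    have "s * s = (sqrt 3 * sqrt 3) / 4" unfolding cs(2) by simp
    hence s2: "s * s = 3/4" by simp
    have sn: "s \<noteq> 0" using s2 by auto
    define D where "D = b11 - b22"
    have e1: "s * b12 = 3/4 * D" using E11 b12 s2 unfolding cs(1) D_def by (simp add: algebra_simps)
    have e2: "s * D = -3 * b12" using E12 b12 s2 unfolding cs(1) D_def by (simp add: algebra_simps)
    have "(s * s) * D = -3 * (s * b12)" using e2 by (metis mult.assoc mult.left_commute)
    hence "3/4 * D = -3 * (3/4 * D)" using e1 s2 by simp
    hence D0: "D = 0" by simp
    hence "b12 = 0" using e1 sn by simp
    thus ?thesis using D0 unfolding D_def by simp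
  qed
  define \<alpha> where "\<alpha> = b11 / d"
  have hW: "\<And>k l. hess_at W 0 k l = (if k = l then \<alpha> else 0)"
  proof -
    fix k l :: 2
    have "(\<Sum>p\<in>UNIV. \<Sum>q\<in>UNIV. \<rho> p $ k * \<rho> q $ l * h p q) = (if k = l then b11 else 0)"
    proof -
      have k: "k = 1 \<or> k = 2" by (rule exhaust_2)
      have l: "l = 1 \<or> l = 2" by (rule exhaust_2)
      from k l bb b12 show ?thesis
        by (auto simp: b11_def b12_def b21_def b22_def X_def Y_def mult_ac)
    qed
    thus "hess_at W 0 k l = (if k = l then \<alpha> else 0)" unfolding hessW \<alpha>_def by simp
  qed
  have ci: "(\<Sum>p\<in>UNIV. \<Sum>q\<in>UNIV. h p q * coord1 A (\<rho> p) * coord1 A (\<rho> q)) \<ge> c\<^sub>0 * (\<Sum>p\<in>UNIV. (coord1 A (\<rho> p))\<^sup>2)"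
    unfolding h_def using detA R_sub stable c0_pos by (intro core_ineq2) auto
  obtain p0 where p0: "coord1 A (\<rho> p0) \<noteq> 0" using nonzero_coord2[of A \<rho>] detA R_span by auto
  have pos: "0 < (\<Sum>p\<in>UNIV. (coord1 A (\<rho> p))\<^sup>2)"
    by (rule sum_pos2[of UNIV p0]) (use p0 in auto)
  define G1 where "G1 = A$2$2 / d"
  define G2 where "G2 = - A$1$2 / d"
  have crd: "\<And>p. coord1 A (\<rho> p) = G1 * X p + G2 * Y p"
    unfolding coord1_def G1_def G2_def X_def Y_def d_def by (simp add: diff_divide_distrib)
  have "(\<Sum>p\<in>UNIV. \<Sum>q\<in>UNIV. h p q * coord1 A (\<rho> p) * coord1 A (\<rho> q)) = (G1 * G1 + G2 * G2) * b11"
    unfolding crd bilin b11_def[symmetric] b12_def[symmetric] b21_def[symmetric] b22_def[symmetric]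
    using bb b12 by (simp add: algebra_simps)
  hence "(G1 * G1 + G2 * G2) * b11 > 0" using ci pos c0_pos
    by (smt (verit) mult_pos_pos)
  hence "b11 > 0"
    by (smt (verit) mult_nonneg_nonpos zero_le_square add_nonneg_nonneg)
  hence apos: "\<alpha> > 0" unfolding \<alpha>_def d_def using detA by simp
  have pde: "\<And>u x. twice_differentiable u \<Longrightarrow>
      - (\<Sum>k\<in>UNIV. pderiv_at (\<lambda>y. \<Sum>l\<in>UNIV. hess_at W 0 k l * pderiv_at u l y) k x)
       = - \<alpha> * (\<Sum>k\<in>UNIV. hess_at u x k k)"
  proof -
    fix u :: "real^2 \<Rightarrow> real" and x
    assume tu: "twice_differentiable u"
    have "\<And>k. pderiv_at (\<lambda>y. \<Sum>l\<in>UNIV. hess_at W 0 k l * pderiv_at u l y) k x = \<alpha> * hess_at u x k k"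
    proof -
      fix k :: 2
      have "pderiv_at (\<lambda>y. \<Sum>l\<in>UNIV. hess_at W 0 k l * pderiv_at u l y) k x
          = (\<Sum>l\<in>UNIV. hess_at W 0 k l * pderiv_at (pderiv_at u l) k x)"
        using tu unfolding twice_differentiable_def by (intro pderiv_lin_comb) auto
      also have "\<dots> = \<alpha> * hess_at u x k k" unfolding hW
        by (simp add: hess_at_def if_distrib if_distribR cong: if_cong)
      finally show "?thesis k" .
    qed
    thus "?thesis u x" by (simp add: sum_distrib_left sum_negf)
  qed
  show ?thesis using apos hW pde by blast
qed

end
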